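(* Let $p\in(1,+\infty]$ and $q\in[1,+\infty)$ with $p^{-1}+q^{-1}=1$. Let $f\colon[0,1]\times\mathbb R\to\mathbb R$ satisfy: for every $u\in\mathbb R$, $t\mapsto f(t,u)$ is Lebesgue measurable; for a.e. $t\in[0,1]$, $u\mapsto f(t,u)$ is continuous; and there exist a non-decreasing $\psi\colon[0,+\infty)\to[0,+\infty)$ and $\phi\in L^p([0,1])$, $\phi\ge0$, with $|f(t,u)|\le\phi(t)\psi(|u|)$ for $t\in[0,1]$, $u\in\mathbb R$. Let $k\colon[0,1]\times[0,1]\to\mathbb R$ satisfy: for every $t\in[0,1]$, $s\mapsto k(t,s)$ belongs to $L^q([0,1])$; there is $m\in L^q([0,1])$, $m\ge0$, with $\operatorname{var}_{[0,1]}k(\cdot,s)\le m(s)$ for a.e. $s\in[0,1]$; and for every $\tau\in[0,1]$, $\lim_{t\to\tau}\int_0^1|k(t,s)-k(\tau,s)|\phi(s)\,ds=0$. Then the mapping $F_2(x)(t)=\int_0^1k(t,s)f(s,x(s))\,ds$, $t\in[0,1]$, is a well-defined completely continuous mapping $F_2\colon BV[0,1]\to CBV[0,1]$.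
   Context: $BV[0,1]$ is the Banach space of real functions of bounded Jordan variation on $[0,1]$ with norm $\|f\|_{BV}=|f(0)|+\operatorname{var}_{[0,1]}f$ ($\operatorname{var}$ denoting Jordan variation); $CBV[0,1]$ is its closed subspace of continuous functions. Completely continuous means continuous and mapping bounded sets into relatively compact sets. *)

theory Defs
  imports "HOL-Analysis.Analysis"
begin

definition partitions :: "real \<Rightarrow> real \<Rightarrow> real list set" where
  "partitions a b = {xs. sorted xs \<and> set xs \<subseteq> {a..b}}"

definition pvar :: "(real \<Rightarrow> real) \<Rightarrow> real list \<Rightarrow> real" where
  "pvar g xs = (\<Sum>i<length xs - 1. \<bar>g (xs ! Suc i) - g (xs ! i)\<bar>)"

definition variation :: "real \<Rightarrow> real \<Rightarrow> (real \<Rightarrow> real) \<Rightarrow> ereal" where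
  "variation a b g = (SUP xs \<in> partitions a b. ereal (pvar g xs))"

text \<open>BV[0,1] (functions are only considered on [0,1]) and its norm.\<close>

definition BV :: "(real \<Rightarrow> real) set" where
  "BV = {g. variation 0 1 g < \<infinity>}"

definition bv_norm :: "(real \<Rightarrow> real) \<Rightarrow> real" where
  "bv_norm g = \<bar>g 0\<bar> + real_of_ereal (variation 0 1 g)"

definition CBV :: "(real \<Rightarrow> real) set" where
  "CBV = {g \<in> BV. continuous_on {0..1} g}"

definition in_Lp :: "ereal \<Rightarrow> (real \<Rightarrow> real) \<Rightarrow> bool" where
  "in_Lp p g \<longleftrightarrow> set_borel_measurable lebesgue {0..1} g \<and>
     (if p = \<infinity> then (\<exists>C. AE s in lebesgue. s \<in> {0..1} \<longrightarrow> \<bar>g s\<bar> \<le> C)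
      else set_integrable lebesgue {0..1} (\<lambda>s. \<bar>g s\<bar> powr real_of_ereal p))"

definition F2 :: "(real \<Rightarrow> real \<Rightarrow> real) \<Rightarrow> (real \<Rightarrow> real \<Rightarrow> real) \<Rightarrow> (real \<Rightarrow> real) \<Rightarrow> real \<Rightarrow> real" where
  "F2 k f x = (\<lambda>t. LINT s:{0..1}|lebesgue. k t s * f s (x s))"

end

theory Submission
  imports Defs "HOL-Library.Diagonal_Subsequence"
begin

lemma pvar_Nil[simp]: "pvar g [] = 0" and pvar_single[simp]: "pvar g [a] = 0"
  by (simp_all add: pvar_def)

lemma pvar_Cons2: "pvar g (a # b # xs) = \<bar>g b - g a\<bar> + pvar g (b # xs)"
  unfolding pvar_def by (simp del: sum.lessThan_Suc add: sum.lessThan_Suc_shift)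

lemma pvar_append:
  "pvar g (xs @ ys) = pvar g xs + pvar g ys +
     (if xs \<noteq> [] \<and> ys \<noteq> [] then \<bar>g (hd ys) - g (last xs)\<bar> else 0)"
proof (induction xs rule: induct_list012)
  case 1 then show ?case by simp
next
  case (2 a) then show ?case
    by (cases ys) (auto simp: pvar_Cons2)
next
  case (3 a b rest)
  then show ?case by (auto simp: pvar_Cons2)
qed

lemma pvar_nonneg: "pvar g xs \<ge> 0"
  unfolding pvar_def by (auto intro: sum_nonneg)

lemma partitions_Nil[simp]: "[] \<in> partitions a b"
  by (simp add: partitions_def)

lemma pvar_le_variation: "xs \<in> partitions a b \<Longrightarrow> ereal (pvar g xs) \<le> variation a b g"
  unfolding variation_def by (rule SUP_upper)

lemma variation_nonneg: "variation a b g \<ge> 0"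
  using pvar_le_variation[of "[]" a b g] by (simp add: zero_ereal_def)

lemma variation_two:
  assumes "a \<le> s" "s \<le> t" "t \<le> b"
  shows "ereal \<bar>g t - g s\<bar> \<le> variation a b g"
proof -
  have "[s,t] \<in> partitions a b" using assms by (auto simp: partitions_def)
  from pvar_le_variation[OF this, of g] show ?thesis by (simp add: pvar_Cons2)
qed

lemma variation_mono_right:
  assumes "t \<le> t'" shows "variation a t g \<le> variation a t' g"
  unfolding variation_def
  by (rule SUP_subset_mono) (use assms in \<open>auto simp: partitions_def\<close>)

lemma variation_append:
  assumes "0 \<le> s" "s \<le> t"
  shows "variation 0 s g + ereal \<bar>g t - g s\<bar> \<le> variation 0 t g"
proof (cases "variation 0 t g = \<infinity>")
  case True then show ?thesis by simp
next
  case False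
  then obtain V where V: "variation 0 t g = ereal V"
    using variation_nonneg[of 0 t g] by (cases "variation 0 t g") auto
  have "variation 0 s g \<le> ereal (V - \<bar>g t - g s\<bar>)"
    unfolding variation_def
  proof (rule SUP_least)
    fix xs assume xs: "xs \<in> partitions 0 s"
    have "xs @ [s, t] \<in> partitions 0 t"
      using xs assms by (auto simp: partitions_def sorted_append)
    then have "ereal (pvar g (xs @ [s,t])) \<le> ereal V"
      using pvar_le_variation V by metis
    moreover have "pvar g (xs @ [s,t]) \<ge> pvar g xs + \<bar>g t - g s\<bar>"
      by (simp add: pvar_append pvar_Cons2)
    ultimately show "ereal (pvar g xs) \<le> ereal (V - \<bar>g t - g s\<bar>)" by simp
  qed
  then show ?thesis using V
    by (cases "variation 0 s g") auto
qed

lemma partitions_sub: "xs \<in> partitions a b \<Longrightarrow> set xs \<subseteq> {a..b}"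
  by (simp add: partitions_def)

lemma pvar_cong: "(\<And>x. x \<in> set xs \<Longrightarrow> g x = h x) \<Longrightarrow> pvar g xs = pvar h xs"
  unfolding pvar_def by (intro sum.cong refl) (auto simp: nth_mem)

lemma variation_cong:
  "(\<And>x. x \<in> {a..b} \<Longrightarrow> g x = h x) \<Longrightarrow> variation a b g = variation a b h"
  unfolding variation_def
  by (intro SUP_cong refl arg_cong[where f=ereal] pvar_cong) (auto simp: partitions_def)

lemma bv_norm_cong:
  "(\<And>x. x \<in> {0..1} \<Longrightarrow> g x = h x) \<Longrightarrow> bv_norm g = bv_norm h"
  unfolding bv_norm_def using variation_cong[of 0 1 g h] by simp

lemma BV_cong:
  "(\<And>x. x \<in> {0..1} \<Longrightarrow> g x = h x) \<Longrightarrow> g \<in> BV \<longleftrightarrow> h \<in> BV"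
  unfolding BV_def using variation_cong[of 0 1 g h] by simp

lemma CBV_cong:
  "(\<And>x. x \<in> {0..1} \<Longrightarrow> g x = h x) \<Longrightarrow> g \<in> CBV \<longleftrightarrow> h \<in> CBV"
  unfolding CBV_def using BV_cong[of g h] continuous_on_cong[of "{0..1}" "{0..1}" g h]
  by auto

lemma pvar_diff: "pvar (\<lambda>x. g x - h x) xs \<le> pvar g xs + pvar h xs"
  unfolding pvar_def sum.distrib[symmetric] by (intro sum_mono) linarith

lemma variation_diff:
  "variation a b (\<lambda>x. g x - h x) \<le> variation a b g + variation a b h"
  unfolding variation_def
proof (rule SUP_least)
  fix xs assume xs: "xs \<in> partitions a b"
  have "ereal (pvar (\<lambda>x. g x - h x) xs) \<le> ereal (pvar g xs) + ereal (pvar h xs)"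
    using pvar_diff by simp
  also have "\<dots> \<le> (SUP xs\<in>partitions a b. ereal (pvar g xs)) + (SUP xs\<in>partitions a b. ereal (pvar h xs))"
    by (intro add_mono SUP_upper xs)
  finally show "ereal (pvar (\<lambda>x. g x - h x) xs) \<le> \<dots>" .
qed

lemma BV_diff: "g \<in> BV \<Longrightarrow> h \<in> BV \<Longrightarrow> g - h \<in> BV"
  unfolding BV_def fun_diff_def using variation_diff[of 0 1 g h]
  by (metis (no_types, lifting) ereal_less_PInfty ereal_plus_eq_PInfty mem_Collect_eq order_le_less_trans)

lemma BV_bound:
  assumes "g \<in> BV" "s \<in> {0..1}"
  shows "\<bar>g s\<bar> \<le> bv_norm g"
proof -
  have fin: "variation 0 1 g < \<infinity>" using assms by (simp add: BV_def)
  have "ereal \<bar>g s - g 0\<bar> \<le> variation 0 1 g" using assms by (intro variation_two) auto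
  then have "\<bar>g s - g 0\<bar> \<le> real_of_ereal (variation 0 1 g)"
    using fin variation_nonneg[of 0 1 g]
    by (cases "variation 0 1 g") auto
  then show ?thesis unfolding bv_norm_def by linarith
qed

lemma bv_norm_nonneg: "bv_norm g \<ge> 0"
  unfolding bv_norm_def using variation_nonneg[of 0 1 g]
  by (cases "variation 0 1 g") auto


lemma borel_to_lebesgue:
  assumes "h \<in> borel_measurable borel" shows "h \<in> borel_measurable lebesgue"
proof -
  have "h \<in> borel_measurable lborel" using assms by (simp only: measurable_lborel2)
  then show ?thesis by (rule measurable_completion)
qed

lemma bv_mono_decomp:
  assumes g: "g \<in> BV"
  shows "\<exists>P Q. mono P \<and> mono Q \<and> (\<forall>t. \<bar>P t\<bar> \<le> bv_norm g) \<and> (\<forall>t. \<bar>Q t\<bar> \<le> 2 * bv_norm g)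
     \<and> (\<forall>t\<in>{0..1}. g t = P t - Q t)"
proof -
  have fin: "variation 0 1 g < \<infinity>" using g by (simp add: BV_def)
  define V where "V t = real_of_ereal (variation 0 t g)" for t
  have Vfin: "variation 0 t g = ereal (V t)" if "t \<le> 1" for t
  proof -
    have "variation 0 t g \<le> variation 0 1 g" using that by (rule variation_mono_right)
    then show ?thesis using fin variation_nonneg[of 0 t g] unfolding V_def
      by (cases "variation 0 t g") auto
  qed
  have V0: "0 \<le> V t" if "t \<le> 1" for t
    using Vfin[OF that] variation_nonneg[of 0 t g] by simp
  have Vle: "V t \<le> bv_norm g" if "t \<le> 1" for t
  proof -
    have "variation 0 t g \<le> variation 0 1 g" using that by (rule variation_mono_right)
    then have "V t \<le> V 1" using Vfin that by simp
    moreover have "bv_norm g = \<bar>g 0\<bar> + V 1" by (simp add: bv_norm_def V_def)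
    ultimately show ?thesis by simp
  qed
  have Vstep: "V s + \<bar>g t - g s\<bar> \<le> V t" if "0 \<le> s" "s \<le> t" "t \<le> 1" for s t
    using variation_append[OF that(1,2), of g] Vfin[of s] Vfin[of t] that by simp
  define c where "c t = max 0 (min 1 (t::real))" for t
  have c01: "0 \<le> c t" "c t \<le> 1" for t by (auto simp: c_def)
  have cmono: "s \<le> t \<Longrightarrow> c s \<le> c t" for s t by (auto simp: c_def)
  have cid: "t \<in> {0..1} \<Longrightarrow> c t = t" for t by (auto simp: c_def)
  define P where "P t = V (c t)" for t
  define Q where "Q t = V (c t) - g (c t)" for t
  have step': "V (c s) + \<bar>g (c t) - g (c s)\<bar> \<le> V (c t)" if "s \<le> t" for s t
    using Vstep[of "c s" "c t"] c01[of s] c01[of t] cmono[OF that] by simp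
  have "mono P"
  proof (rule monoI)
    fix s t :: real assume "s \<le> t"
    from step'[OF this] show "P s \<le> P t" unfolding P_def using abs_ge_zero[of "g (c t) - g (c s)"] by linarith
  qed
  moreover have "mono Q"
  proof (rule monoI)
    fix s t :: real assume "s \<le> t"
    from step'[OF this] show "Q s \<le> Q t" unfolding Q_def using abs_ge_self[of "g (c t) - g (c s)"] by linarith
  qed
  moreover have "\<forall>t. \<bar>P t\<bar> \<le> bv_norm g"
  proof
    fix t show "\<bar>P t\<bar> \<le> bv_norm g" unfolding P_def using V0[OF c01(2)[of t]] Vle[OF c01(2)[of t]] by simp
  qed
  moreover have "\<forall>t. \<bar>Q t\<bar> \<le> 2 * bv_norm g"
  proof
    fix t
    have "\<bar>g (c t)\<bar> \<le> bv_norm g" using BV_bound[OF g] c01[of t] by simp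
    moreover note V0[OF c01(2)[of t]] Vle[OF c01(2)[of t]]
    ultimately show "\<bar>Q t\<bar> \<le> 2 * bv_norm g" unfolding Q_def by linarith
  qed
  moreover have "\<forall>t\<in>{0..1}. g t = P t - Q t" unfolding P_def Q_def using cid by simp
  ultimately show ?thesis by (intro exI[of _ P] exI[of _ Q] conjI) assumption+
qed

lemma BV_measurable:
  assumes g: "g \<in> BV"
  shows "set_borel_measurable lebesgue {0..1} g"
proof -
  obtain P Q where PQ: "mono P" "mono Q" "\<forall>t\<in>{0..1}. g t = P t - Q t"
    using bv_mono_decomp[OF g] by blast
  have "(\<lambda>t. P t - Q t) \<in> borel_measurable lebesgue"
    using borel_to_lebesgue[OF borel_measurable_mono[OF PQ(1)]] borel_to_lebesgue[OF borel_measurable_mono[OF PQ(2)]]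
    by (rule borel_measurable_diff)
  then have "(\<lambda>t. indicator {0..1} t *\<^sub>R (P t - Q t)) \<in> borel_measurable lebesgue"
    by (intro borel_measurable_scaleR borel_measurable_indicator) auto
  moreover have "(\<lambda>t. indicator {0..1} t *\<^sub>R (P t - Q t)) = (\<lambda>t. indicator {0..1} t *\<^sub>R g t)"
    using PQ(3) by (auto simp: indicator_def)
  ultimately show ?thesis unfolding set_borel_measurable_def by simp
qed

lemma minus_one_less': "x - 1 < (x::real)"
  by simp

text \<open>Helly's selection theorem, a variant without right-continuity (same proof as in the
  HOL-Probability library).\<close>

theorem Helly_selection':
  fixes f :: "nat \<Rightarrow> real \<Rightarrow> real"
  assumes mono: "\<And>n. mono (f n)"
  assumes bdd: "\<And>n x. \<bar>f n x\<bar> \<le> M"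
  shows "\<exists>s. strict_mono (s::nat \<Rightarrow> nat) \<and> (\<exists>F. mono F \<and> (\<forall>x. \<bar>F x\<bar> \<le> M) \<and>
    (\<forall>x. continuous (at x) F \<longrightarrow> (\<lambda>n. f (s n) x) \<longlonglongrightarrow> F x))"
proof -
  obtain m :: "real \<Rightarrow> nat" where "bij_betw m \<rat> UNIV"
    using countable_rat Rats_infinite by (erule countableE_infinite)
  then obtain r :: "nat \<Rightarrow> real" where bij: "bij_betw r UNIV \<rat>"
    using bij_betw_inv by blast

  have dense_r: "\<And>x y. x < y \<Longrightarrow> \<exists>n. x < r n \<and> r n < y"
    by (metis Rats_dense_in_real bij f_the_inv_into_f bij_betw_def)

  let ?P = "\<lambda>n. \<lambda>s. convergent (\<lambda>k. f (s k) (r n))"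
  interpret nat: subseqs ?P
  proof (unfold convergent_def, unfold subseqs_def, auto)
    fix n :: nat and s :: "nat \<Rightarrow> nat" assume s: "strict_mono s"
    have "bounded {-M..M}"
      using bounded_closed_interval by auto
    moreover have "\<And>k. f (s k) (r n) \<in> {-M..M}"
      using bdd by (simp add: abs_le_iff minus_le_iff)
    ultimately have "\<exists>l s'. strict_mono s' \<and> ((\<lambda>k. f (s k) (r n)) \<circ> s') \<longlonglongrightarrow> l"
      using compact_Icc compact_imp_seq_compact seq_compactE by metis
    thus "\<exists>s'. strict_mono (s'::nat\<Rightarrow>nat) \<and> (\<exists>l. (\<lambda>k. f (s (s' k)) (r n)) \<longlonglongrightarrow> l)"
      by (auto simp: comp_def)
  qed
  define d where "d = nat.diagseq"
  have subseq: "strict_mono d"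
    unfolding d_def using nat.subseq_diagseq by auto
  have rat_cnv: "?P n d" for n
  proof -
    have Pn_seqseq: "?P n (nat.seqseq (Suc n))"
      by (rule nat.seqseq_holds)
    have 1: "(\<lambda>k. f ((nat.seqseq (Suc n) \<circ> (\<lambda>k. nat.fold_reduce (Suc n) k
      (Suc n + k))) k) (r n)) = (\<lambda>k. f (nat.seqseq (Suc n) k) (r n)) \<circ>
      (\<lambda>k. nat.fold_reduce (Suc n) k (Suc n + k))"
      by auto
    have 2: "?P n (d \<circ> ((+) (Suc n)))"
      unfolding d_def nat.diagseq_seqseq 1
      by (intro convergent_subseq_convergent Pn_seqseq nat.subseq_diagonal_rest)
    then obtain L where 3: "(\<lambda>na. f (d (na + Suc n)) (r n)) \<longlonglongrightarrow> L"
      by (auto simp: add.commute dest: convergentD)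
    then have "(\<lambda>k. f (d k) (r n)) \<longlonglongrightarrow> L"
      by (rule LIMSEQ_offset)
    then show ?thesis
      by (auto simp: convergent_def)
  qed
  let ?f = "\<lambda>n. \<lambda>k. f (d k) (r n)"
  have lim_f: "?f n \<longlonglongrightarrow> lim (?f n)" for n
    using rat_cnv convergent_LIMSEQ_iff by auto
  have lim_bdd: "lim (?f n) \<in> {-M..M}" for n
  proof -
    have "closed {-M..M}" using closed_real_atLeastAtMost by auto
    hence "(\<forall>i. ?f n i \<in> {-M..M}) \<and> ?f n \<longlonglongrightarrow> lim (?f n) \<longrightarrow> lim (?f n) \<in> {-M..M}"
      unfolding closed_sequential_limits by (drule_tac x = "\<lambda>k. f (d k) (r n)" in spec) blast
    moreover have "\<forall>i. ?f n i \<in> {-M..M}"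
      using bdd by (simp add: abs_le_iff minus_le_iff)
    ultimately show "lim (?f n) \<in> {-M..M}"
      using lim_f by auto
  qed
  then have limset_bdd: "\<And>x. {lim (?f n) |n. x < r n} \<subseteq> {-M..M}"
    by auto
  then have bdd_below: "bdd_below {lim (?f n) |n. x < r n}" for x
    by (metis (mono_tags) bdd_below_Icc bdd_below_mono)
  have r_unbdd: "\<exists>n. x < r n" for x
    using dense_r[OF less_add_one, of x] by auto
  then have nonempty: "{lim (?f n) |n. x < r n} \<noteq> {}" for x
    by auto

  define F where "F x = Inf {lim (?f n) |n. x < r n}" for x
  have F_eq: "ereal (F x) = (INF n\<in>{n. x < r n}. ereal (lim (?f n)))" for x
    unfolding F_def by (subst ereal_Inf'[OF bdd_below nonempty]) (simp add: setcompr_eq_image image_comp)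
  have mono_F: "mono F"
    using nonempty by (auto intro!: cInf_superset_mono simp: F_def bdd_below mono_def)
  moreover
  { fix x
    have "F x \<in> {-M..M}"
      unfolding F_def using limset_bdd bdd_below r_unbdd by (intro closed_subset_contains_Inf) auto
    then have "\<bar>F x\<bar> \<le> M" by auto }
  moreover have "(\<lambda>n. f (d n) x) \<longlonglongrightarrow> F x" if cts: "continuous (at x) F" for x
  proof (rule limsup_le_liminf_real)
    show "limsup (\<lambda>n. f (d n) x) \<le> F x"
    proof (rule tendsto_lowerbound)
      show "(F \<longlongrightarrow> ereal (F x)) (at_right x)"
        using cts unfolding continuous_at_split by (auto simp: continuous_within)
      show "\<forall>\<^sub>F i in at_right x. limsup (\<lambda>n. f (d n) x) \<le> F i"
        unfolding eventually_at_right[OF less_add_one]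
      proof (rule, rule, rule less_add_one, safe)
        fix y assume y: "x < y"
        with dense_r obtain N where "x < r N" "r N < y" by auto
        have *: "y < r n' \<Longrightarrow> lim (?f N) \<le> lim (?f n')" for n'
          using \<open>r N < y\<close> by (intro LIMSEQ_le[OF lim_f lim_f]) (auto intro!: mono[THEN monoD])
        have "limsup (\<lambda>n. f (d n) x) \<le> limsup (?f N)"
          using \<open>x < r N\<close> by (auto intro!: Limsup_mono always_eventually mono[THEN monoD])
        also have "\<dots> = lim (\<lambda>n. ereal (?f N n))"
          using rat_cnv[of N] by (force intro!: convergent_limsup_cl simp: convergent_def)
        also have "\<dots> \<le> F y"
          by (auto intro!: INF_greatest * simp: convergent_real_imp_convergent_ereal rat_cnv F_eq)
        finally show "limsup (\<lambda>n. f (d n) x) \<le> F y" .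
      qed
    qed simp
    show "F x \<le> liminf (\<lambda>n. f (d n) x)"
    proof (rule tendsto_upperbound)
      show "(F \<longlongrightarrow> ereal (F x)) (at_left x)"
        using cts unfolding continuous_at_split by (auto simp: continuous_within)
      show "\<forall>\<^sub>F i in at_left x. F i \<le> liminf (\<lambda>n. f (d n) x)"
        unfolding eventually_at_left[OF minus_one_less']
      proof (rule, rule, rule minus_one_less', safe)
        fix y assume y: "y < x"
        with dense_r obtain N where "y < r N" "r N < x" by auto
        have "F y \<le> liminf (?f N)"
          using \<open>y < r N\<close> by (auto simp: F_eq convergent_real_imp_convergent_ereal
            rat_cnv convergent_liminf_cl intro!: INF_lower2)
        also have "\<dots> \<le> liminf (\<lambda>n. f (d n) x)"
          using \<open>r N < x\<close> by (auto intro!: Liminf_mono monoD[OF mono] always_eventually)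
        finally show "F y \<le> liminf (\<lambda>n. f (d n) x)" .
      qed
    qed simp
  qed
  ultimately show ?thesis using subseq by auto
qed

lemma Helly_ae:
  fixes f :: "nat \<Rightarrow> real \<Rightarrow> real"
  assumes mono: "\<And>n. mono (f n)" and bdd: "\<And>n x. \<bar>f n x\<bar> \<le> M"
  shows "\<exists>s F N. strict_mono s \<and> mono F \<and> (\<forall>x. \<bar>F x\<bar> \<le> M) \<and> countable N \<and>
    (\<forall>x. x \<notin> N \<longrightarrow> (\<lambda>n. f (s n) x) \<longlonglongrightarrow> F x)"
proof -
  obtain s F where sF: "strict_mono s" "mono F" "\<forall>x. \<bar>F x\<bar> \<le> M"
    "\<forall>x. continuous (at x) F \<longrightarrow> (\<lambda>n. f (s n) x) \<longlonglongrightarrow> F x"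
    using Helly_selection'[of f M, OF mono bdd] by blast
  have "countable {a. \<not> continuous (at a) F}" using mono_ctble_discont[OF sF(2)] .
  then show ?thesis using sF by blast
qed

lemma BV_helly:
  fixes xs :: "nat \<Rightarrow> real \<Rightarrow> real"
  assumes xs: "\<And>n. xs n \<in> BV" "\<And>n. bv_norm (xs n) \<le> R"
  shows "\<exists>r X N. strict_mono r \<and> countable N \<and> X \<in> borel_measurable borel \<and>
      (\<forall>s. \<bar>X s\<bar> \<le> 3 * R) \<and> (\<forall>s\<in>{0..1}. s \<notin> N \<longrightarrow> (\<lambda>n. xs (r n) s) \<longlonglongrightarrow> X s)"
proof -
  have ex: "\<forall>n. \<exists>P. \<exists>Q. mono P \<and> mono Q \<and> (\<forall>t. \<bar>P t\<bar> \<le> R) \<and> (\<forall>t. \<bar>Q t\<bar> \<le> 2 * R)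
     \<and> (\<forall>t\<in>{0..1}. xs n t = P t - Q t)"
  proof
    fix n
    obtain P Q where H: "mono P" "mono Q" "\<forall>t. \<bar>P t\<bar> \<le> bv_norm (xs n)" "\<forall>t. \<bar>Q t\<bar> \<le> 2 * bv_norm (xs n)"
      "\<forall>t\<in>{0..1}. xs n t = P t - Q t" using bv_mono_decomp[OF xs(1)[of n]] by blast
    have "\<forall>t. \<bar>P t\<bar> \<le> R" using H(3) xs(2)[of n] by (meson order_trans)
    moreover have "\<forall>t. \<bar>Q t\<bar> \<le> 2 * R" using H(4) xs(2)[of n] by (meson order_trans mult_left_mono zero_le_numeral)
    ultimately show "\<exists>P. \<exists>Q. mono P \<and> mono Q \<and> (\<forall>t. \<bar>P t\<bar> \<le> R) \<and> (\<forall>t. \<bar>Q t\<bar> \<le> 2 * R)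
     \<and> (\<forall>t\<in>{0..1}. xs n t = P t - Q t)" using H by blast
  qed
  obtain P where "\<forall>n. \<exists>Q. mono (P n) \<and> mono Q \<and> (\<forall>t. \<bar>P n t\<bar> \<le> R) \<and> (\<forall>t. \<bar>Q t\<bar> \<le> 2 * R)
     \<and> (\<forall>t\<in>{0..1}. xs n t = P n t - Q t)" using choice[OF ex] by blast
  from choice[OF this] obtain Q where PQ0: "\<forall>n. mono (P n) \<and> mono (Q n) \<and> (\<forall>t. \<bar>P n t\<bar> \<le> R) \<and> (\<forall>t. \<bar>Q n t\<bar> \<le> 2 * R)
     \<and> (\<forall>t\<in>{0..1}. xs n t = P n t - Q n t)" by blast
  have PQ: "\<And>n. mono (P n)" "\<And>n. mono (Q n)"
    "\<And>n t. \<bar>P n t\<bar> \<le> R" "\<And>n t. \<bar>Q n t\<bar> \<le> 2 * R"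
    "\<And>n t. t\<in>{0..1} \<Longrightarrow> xs n t = P n t - Q n t"
    using PQ0 by blast+
  obtain s1 G1 N1 where 1: "strict_mono s1" "mono G1" "\<forall>x. \<bar>G1 x\<bar> \<le> R" "countable N1"
    "\<forall>x. x \<notin> N1 \<longrightarrow> (\<lambda>n. P (s1 n) x) \<longlonglongrightarrow> G1 x"
    using Helly_ae[of P R] PQ by blast
  obtain s2 G2 N2 where 2: "strict_mono s2" "mono G2" "\<forall>x. \<bar>G2 x\<bar> \<le> 2 * R" "countable N2"
    "\<forall>x. x \<notin> N2 \<longrightarrow> (\<lambda>n. Q (s1 (s2 n)) x) \<longlonglongrightarrow> G2 x"
    using Helly_ae[of "\<lambda>n. Q (s1 n)" "2 * R"] PQ by blast
  define r where "r = s1 \<circ> s2"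
  have "strict_mono r" unfolding r_def using 1 2 by (simp add: strict_mono_o)
  moreover have "countable (N1 \<union> N2)" using 1 2 by simp
  moreover have "(\<lambda>x. G1 x - G2 x) \<in> borel_measurable borel"
    using borel_measurable_mono[OF 1(2)] borel_measurable_mono[OF 2(2)] by (rule borel_measurable_diff)
  moreover have "\<forall>x. \<bar>G1 x - G2 x\<bar> \<le> 3 * R"
  proof
    fix x show "\<bar>G1 x - G2 x\<bar> \<le> 3 * R" using spec[OF 1(3), of x] spec[OF 2(3), of x] abs_triangle_ineq4[of "G1 x" "G2 x"] by linarith
  qed
  moreover have "\<forall>s\<in>{0..1}. s \<notin> N1 \<union> N2 \<longrightarrow> (\<lambda>n. xs (r n) s) \<longlonglongrightarrow> G1 s - G2 s"
  proof (intro ballI impI)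
    fix s assume s: "s \<in> {0..1}" "s \<notin> N1 \<union> N2"
    then have s: "s \<in> {0..1}" "s \<notin> N1" "s \<notin> N2" by auto
    have a: "(\<lambda>n. P (s1 (s2 n)) s) \<longlonglongrightarrow> G1 s"
      using LIMSEQ_subseq_LIMSEQ[OF 1(5)[rule_format, OF s(2)] 2(1)] by (simp add: comp_def)
    have "(\<lambda>n. P (s1 (s2 n)) s - Q (s1 (s2 n)) s) \<longlonglongrightarrow> G1 s - G2 s"
      using a 2(5) s by (intro tendsto_diff) auto
    then show "(\<lambda>n. xs (r n) s) \<longlonglongrightarrow> G1 s - G2 s"
      using PQ(5)[OF s(1)] by (simp add: r_def)
  qed
  ultimately show ?thesis by blast
qed


lemma floor_approx_tendsto:
  fixes x :: real
  shows "(\<lambda>n. real_of_int \<lfloor>real (Suc n) * x\<rfloor> / real (Suc n)) \<longlonglongrightarrow> x"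
proof (rule tendsto_sandwich[where f="\<lambda>n. x - inverse (real (Suc n))" and h="\<lambda>n. x"])
  show "\<forall>\<^sub>F n in sequentially. x - inverse (real (Suc n)) \<le> real_of_int \<lfloor>real (Suc n) * x\<rfloor> / real (Suc n)"
  proof (intro always_eventually allI)
    fix n
    have p: "real (Suc n) > 0" by simp
    have "real (Suc n) * x - 1 \<le> real_of_int \<lfloor>real (Suc n) * x\<rfloor>"
      by linarith
    then have "(real (Suc n) * x - 1) / real (Suc n) \<le> real_of_int \<lfloor>real (Suc n) * x\<rfloor> / real (Suc n)"
      using p by (intro divide_right_mono) auto
    moreover have "(real (Suc n) * x - 1) / real (Suc n) = x - inverse (real (Suc n))"
      using p by (simp add: field_simps)
    ultimately show "x - inverse (real (Suc n)) \<le> real_of_int \<lfloor>real (Suc n) * x\<rfloor> / real (Suc n)" by simp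
  qed
  show "\<forall>\<^sub>F n in sequentially. real_of_int \<lfloor>real (Suc n) * x\<rfloor> / real (Suc n) \<le> x"
  proof (intro always_eventually allI)
    fix n
    have p: "real (Suc n) > 0" by simp
    have "real_of_int \<lfloor>real (Suc n) * x\<rfloor> \<le> real (Suc n) * x" by linarith
    then show "real_of_int \<lfloor>real (Suc n) * x\<rfloor> / real (Suc n) \<le> x"
      using p by (simp add: divide_le_eq mult.commute)
  qed
  show "(\<lambda>n. x - inverse (real (Suc n))) \<longlonglongrightarrow> x"
    using tendsto_diff[OF tendsto_const LIMSEQ_inverse_real_of_nat, of x] by simp
qed simp

lemma caratheodory_measurable:
  fixes f :: "real \<Rightarrow> real \<Rightarrow> real" and X :: "real \<Rightarrow> real"
  assumes fm: "\<And>u. set_borel_measurable lebesgue {0..1} (\<lambda>t. f t u)"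
    and fc: "AE t in lebesgue. t \<in> {0..1} \<longrightarrow> continuous_on UNIV (f t)"
    and Xm: "set_borel_measurable lebesgue {0..1} X"
    and B: "\<And>s. s \<in> {0..1} \<Longrightarrow> \<bar>X s\<bar> \<le> B"
  shows "set_borel_measurable lebesgue {0..1} (\<lambda>s. f s (X s))"
proof -
  let ?A = "{0..1::real}"
  define Xi where "Xi s = indicator ?A s *\<^sub>R X s" for s
  have Xi_m[measurable]: "Xi \<in> borel_measurable lebesgue"
    using Xm unfolding set_borel_measurable_def Xi_def by simp
  have fm'[measurable]: "(\<lambda>s. indicator ?A s *\<^sub>R f s u) \<in> borel_measurable lebesgue" for u
    using fm[of u] unfolding set_borel_measurable_def by simp
  define N where "N n = \<lceil>real (Suc n) * \<bar>B\<bar>\<rceil> + 1" for n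
  define g where "g n s = (\<Sum>j\<in>{-N n..N n}. if \<lfloor>real (Suc n) * Xi s\<rfloor> = j
      then indicator ?A s *\<^sub>R f s (real_of_int j / real (Suc n)) else 0)" for n s
  have g_m: "g n \<in> borel_measurable lebesgue" for n
    unfolding g_def by measurable
  have g_eq: "g n s = indicator ?A s *\<^sub>R f s (real_of_int \<lfloor>real (Suc n) * X s\<rfloor> / real (Suc n))" for n s
  proof (cases "s \<in> ?A")
    case True
    have XiX: "Xi s = X s" using True by (simp add: Xi_def)
    have b: "\<bar>X s\<bar> \<le> \<bar>B\<bar>" using B[OF True] by simp
    have "\<bar>real (Suc n) * X s\<bar> \<le> real (Suc n) * \<bar>B\<bar>"
      using b by (simp add: abs_mult mult_left_mono)
    then have "\<lfloor>real (Suc n) * X s\<rfloor> \<in> {-N n..N n}"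
    proof -
      assume h: "\<bar>real (Suc n) * X s\<bar> \<le> real (Suc n) * \<bar>B\<bar>"
      define y where "y = real (Suc n) * X s"
      define c where "c = real (Suc n) * \<bar>B\<bar>"
      have h': "\<bar>y\<bar> \<le> c" using h by (simp add: y_def c_def)
      have f: "real_of_int \<lfloor>y\<rfloor> \<le> y" "y < real_of_int \<lfloor>y\<rfloor> + 1" "c \<le> real_of_int \<lceil>c\<rceil>"
        by linarith+
      have yc: "y \<le> c" "-y \<le> c" using h' by auto
      have "real_of_int \<lfloor>y\<rfloor> \<le> real_of_int (\<lceil>c\<rceil> + 1)" "real_of_int (-(\<lceil>c\<rceil> + 1)) \<le> real_of_int \<lfloor>y\<rfloor>"
        using f yc by simp_all linarith+
      then have "\<lfloor>y\<rfloor> \<le> \<lceil>c\<rceil> + 1" "-(\<lceil>c\<rceil> + 1) \<le> \<lfloor>y\<rfloor>" by (simp_all only: of_int_le_iff)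
      then show ?thesis unfolding N_def y_def c_def by simp
    qed
    then show ?thesis
      unfolding g_def XiX by (subst sum.delta') auto
  next
    case False
    then show ?thesis by (simp add: g_def)
  qed
  have lim: "AE s in lebesgue. (\<lambda>n. g n s) \<longlonglongrightarrow> indicator ?A s *\<^sub>R f s (X s)"
    using fc
  proof eventually_elim
    case (elim s)
    show ?case
    proof (cases "s \<in> ?A")
      case True
      have "continuous_on UNIV (f s)" using elim True by simp
      then have "isCont (f s) (X s)" by (simp add: continuous_on_eq_continuous_at)
      then have "(\<lambda>n. f s (real_of_int \<lfloor>real (Suc n) * X s\<rfloor> / real (Suc n))) \<longlonglongrightarrow> f s (X s)"
        using floor_approx_tendsto isCont_tendsto_compose by blast
      then show ?thesis using True by (simp add: g_eq)
    next
      case False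
      then show ?thesis by (simp add: g_eq)
    qed
  qed
  have "(\<lambda>s. lim (\<lambda>n. g n s)) \<in> borel_measurable lebesgue"
    using g_m by (rule borel_measurable_lim_metric)
  moreover have "AE s in lebesgue. lim (\<lambda>n. g n s) = indicator ?A s *\<^sub>R f s (X s)"
    using lim by eventually_elim (rule limI)
  ultimately have "(\<lambda>s. indicator ?A s *\<^sub>R f s (X s)) \<in> borel_measurable lebesgue"
    by (rule borel_measurable_AE)
  then show ?thesis unfolding set_borel_measurable_def .
qed


lemma sbm_iff: "set_borel_measurable M A (f :: _ \<Rightarrow> real) \<longleftrightarrow> (\<lambda>x. indicator A x * f x) \<in> borel_measurable M"
  by (simp add: set_borel_measurable_def)

lemma sbm_mult:
  fixes f g :: "_ \<Rightarrow> real"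
  assumes "set_borel_measurable M A f" "set_borel_measurable M A g"
  shows "set_borel_measurable M A (\<lambda>x. f x * g x)"
proof -
  have "(\<lambda>x. (indicator A x * f x) * (indicator A x * g x)) \<in> borel_measurable M"
    using assms unfolding sbm_iff by (rule borel_measurable_times)
  moreover have "(\<lambda>x. (indicator A x * f x) * (indicator A x * g x)) = (\<lambda>x. indicator A x * (f x * g x))"
    by (auto simp: indicator_def)
  ultimately show ?thesis unfolding sbm_iff by simp
qed

lemma sbm_diff:
  fixes f g :: "_ \<Rightarrow> real"
  assumes "set_borel_measurable M A f" "set_borel_measurable M A g"
  shows "set_borel_measurable M A (\<lambda>x. f x - g x)"
proof -
  have "(\<lambda>x. (indicator A x * f x) - (indicator A x * g x)) \<in> borel_measurable M"
    using assms unfolding sbm_iff by (rule borel_measurable_diff)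
  moreover have "(\<lambda>x. (indicator A x * f x) - (indicator A x * g x)) = (\<lambda>x. indicator A x * (f x - g x))"
    by (auto simp: indicator_def)
  ultimately show ?thesis unfolding sbm_iff by simp
qed

lemma sbm_add:
  fixes f g :: "_ \<Rightarrow> real"
  assumes "set_borel_measurable M A f" "set_borel_measurable M A g"
  shows "set_borel_measurable M A (\<lambda>x. f x + g x)"
proof -
  have "(\<lambda>x. (indicator A x * f x) + (indicator A x * g x)) \<in> borel_measurable M"
    using assms unfolding sbm_iff by (rule borel_measurable_add)
  moreover have "(\<lambda>x. (indicator A x * f x) + (indicator A x * g x)) = (\<lambda>x. indicator A x * (f x + g x))"
    by (auto simp: indicator_def)
  ultimately show ?thesis unfolding sbm_iff by simp
qed

lemma sbm_abs:
  fixes f :: "_ \<Rightarrow> real"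
  assumes "set_borel_measurable M A f"
  shows "set_borel_measurable M A (\<lambda>x. \<bar>f x\<bar>)"
proof -
  have "(\<lambda>x. \<bar>indicator A x * f x\<bar>) \<in> borel_measurable M"
    using assms unfolding sbm_iff by (rule borel_measurable_abs)
  moreover have "(\<lambda>x. \<bar>indicator A x * f x\<bar>) = (\<lambda>x. indicator A x * \<bar>f x\<bar>)"
    by (auto simp: indicator_def)
  ultimately show ?thesis unfolding sbm_iff by simp
qed

lemma sbm_cong:
  fixes f g :: "_ \<Rightarrow> real"
  assumes "set_borel_measurable M A f" "\<And>x. x \<in> A \<Longrightarrow> f x = g x"
  shows "set_borel_measurable M A g"
proof -
  have "(\<lambda>x. indicator A x * f x) = (\<lambda>x. indicator A x * g x)"
    using assms(2) by (auto simp: indicator_def)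
  then show ?thesis using assms(1) unfolding sbm_iff by simp
qed

lemma set_integral_abs_le:
  fixes f :: "_ \<Rightarrow> real"
  shows "\<bar>LINT x:A|M. f x\<bar> \<le> (LINT x:A|M. \<bar>f x\<bar>)"
proof -
  have "\<bar>LINT x:A|M. f x\<bar> \<le> (\<integral>x. \<bar>indicator A x *\<^sub>R f x\<bar> \<partial>M)"
    unfolding set_lebesgue_integral_def by (rule integral_abs_bound)
  also have "(\<lambda>x. \<bar>indicator A x *\<^sub>R f x\<bar>) = (\<lambda>x. indicator A x *\<^sub>R \<bar>f x\<bar>)"
    by (auto simp: indicator_def)
  finally show ?thesis unfolding set_lebesgue_integral_def .
qed

lemma set_integral_sum':
  fixes f :: "'i \<Rightarrow> _ \<Rightarrow> real"
  assumes "\<And>i. i \<in> I \<Longrightarrow> set_integrable M A (f i)"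
  shows "set_integrable M A (\<lambda>x. \<Sum>i\<in>I. f i x)"
    and "(LINT x:A|M. (\<Sum>i\<in>I. f i x)) = (\<Sum>i\<in>I. LINT x:A|M. f i x)"
proof -
  have eq: "(\<lambda>x. indicator A x *\<^sub>R (\<Sum>i\<in>I. f i x)) = (\<lambda>x. \<Sum>i\<in>I. indicator A x *\<^sub>R f i x)"
    by (simp add: sum_distrib_left)
  show "set_integrable M A (\<lambda>x. \<Sum>i\<in>I. f i x)"
    using assms unfolding set_integrable_def eq
    by (intro Bochner_Integration.integrable_sum[where f="\<lambda>i x. indicator A x *\<^sub>R f i x"]) auto
  show "(LINT x:A|M. (\<Sum>i\<in>I. f i x)) = (\<Sum>i\<in>I. LINT x:A|M. f i x)"
    using assms unfolding set_integrable_def set_lebesgue_integral_def eq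
    by (intro Bochner_Integration.integral_sum[where f="\<lambda>i x. indicator A x *\<^sub>R f i x"]) auto
qed

lemma set_DCT0:
  fixes u :: "nat \<Rightarrow> _ \<Rightarrow> real"
  assumes um: "\<And>n. set_borel_measurable M A (u n)" and w: "set_integrable M A w"
    and lim: "AE x in M. x \<in> A \<longrightarrow> (\<lambda>n. u n x) \<longlonglongrightarrow> 0"
    and bd: "\<And>n. AE x in M. x \<in> A \<longrightarrow> \<bar>u n x\<bar> \<le> w x"
  shows "(\<lambda>n. LINT x:A|M. u n x) \<longlonglongrightarrow> 0"
proof -
  have "(\<lambda>n. integral\<^sup>L M (\<lambda>x. indicator A x *\<^sub>R u n x)) \<longlonglongrightarrow> integral\<^sup>L M (\<lambda>x. 0::real)"
  proof (rule integral_dominated_convergence[where w="\<lambda>x. indicator A x *\<^sub>R w x"])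
    show "(\<lambda>x. 0::real) \<in> borel_measurable M" by simp
    show "(\<lambda>x. indicator A x *\<^sub>R u n x) \<in> borel_measurable M" for n
      using um[of n] by (simp add: set_borel_measurable_def)
    show "integrable M (\<lambda>x. indicator A x *\<^sub>R w x)" using w by (simp add: set_integrable_def)
    show "AE x in M. (\<lambda>n. indicator A x *\<^sub>R u n x) \<longlonglongrightarrow> 0"
      using lim by eventually_elim (auto simp: indicator_def)
    show "AE x in M. norm (indicator A x *\<^sub>R u n x) \<le> indicator A x *\<^sub>R w x" for n
      using bd[of n] by eventually_elim (auto simp: indicator_def)
  qed
  then show ?thesis by (simp add: set_lebesgue_integral_def)
qed

definition Gop :: "(real \<Rightarrow> real \<Rightarrow> real) \<Rightarrow> (real \<Rightarrow> real) \<Rightarrow> real \<Rightarrow> real" where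
  "Gop k d = (\<lambda>t. LINT s:{0..1}|lebesgue. k t s * d s)"

lemma F2_Gop: "F2 k f x = Gop k (\<lambda>s. f s (x s))"
  by (simp add: F2_def Gop_def)


locale L45 =
  fixes p :: ereal and q :: real
    and f :: "real \<Rightarrow> real \<Rightarrow> real" and k :: "real \<Rightarrow> real \<Rightarrow> real"
    and \<psi> \<phi> m :: "real \<Rightarrow> real"
  assumes p_gt: "p > 1" and q_ge: "q \<ge> 1"
    and conj: "if p = \<infinity> then q = 1 else 1 / real_of_ereal p + 1 / q = 1"
    and f_meas: "\<And>u. set_borel_measurable lebesgue {0..1} (\<lambda>t. f t u)"
    and f_cont: "AE t in lebesgue. t \<in> {0..1} \<longrightarrow> continuous_on UNIV (f t)"
    and psi_mono: "mono_on {0..} \<psi>" and psi_nonneg: "\<And>u. u \<ge> 0 \<Longrightarrow> \<psi> u \<ge> 0"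
    and phi_Lp: "in_Lp p \<phi>" and phi_nonneg: "\<And>s. s \<in> {0..1} \<Longrightarrow> \<phi> s \<ge> 0"
    and f_bound: "\<And>t u. t \<in> {0..1} \<Longrightarrow> \<bar>f t u\<bar> \<le> \<phi> t * \<psi> \<bar>u\<bar>"
    and k_Lq: "\<And>t. t \<in> {0..1} \<Longrightarrow> in_Lp (ereal q) (k t)"
    and m_Lq: "in_Lp (ereal q) m" and m_nonneg: "\<And>s. s \<in> {0..1} \<Longrightarrow> m s \<ge> 0"
    and k_var: "AE s in lebesgue. s \<in> {0..1} \<longrightarrow> variation 0 1 (\<lambda>t. k t s) \<le> ereal (m s)"
    and k_cont: "\<And>\<tau>. \<tau> \<in> {0..1} \<Longrightarrow>
        ((\<lambda>t. LINT s:{0..1}|lebesgue. \<bar>k t s - k \<tau> s\<bar> * \<phi> s) \<longlongrightarrow> 0) (at \<tau> within {0..1})"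
begin

abbreviation "A \<equiv> {0..1::real}"

lemma phi_m: "set_borel_measurable lebesgue A \<phi>"
  using phi_Lp by (simp add: in_Lp_def)

lemma Lq_m: "in_Lp (ereal q) g \<Longrightarrow> set_borel_measurable lebesgue A g"
  by (simp add: in_Lp_def)

lemma Lq_phi:
  assumes g: "in_Lp (ereal q) g"
  shows "set_integrable lebesgue A (\<lambda>s. \<bar>g s\<bar> * \<phi> s)"
proof -
  have gm: "set_borel_measurable lebesgue A g" using g by (simp add: in_Lp_def)
  have gi: "set_integrable lebesgue A (\<lambda>s. \<bar>g s\<bar> powr q)" using g by (simp add: in_Lp_def)
  have meas: "set_borel_measurable lebesgue A (\<lambda>s. \<bar>g s\<bar> * \<phi> s)"
    by (intro sbm_mult sbm_abs gm phi_m)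
  show ?thesis
  proof (cases "p = \<infinity>")
    case True
    then have q1: "q = 1" using conj by simp
    obtain C where C: "AE s in lebesgue. s \<in> A \<longrightarrow> \<bar>\<phi> s\<bar> \<le> C"
      using phi_Lp True by (auto simp: in_Lp_def)
    have gi1: "set_integrable lebesgue A (\<lambda>s. C * \<bar>g s\<bar>)"
      using gi q1 by simp
    show ?thesis
    proof (rule set_integrable_bound[OF gi1 meas])
      show "AE x in lebesgue. x \<in> A \<longrightarrow> norm (\<bar>g x\<bar> * \<phi> x) \<le> norm (C * \<bar>g x\<bar>)"
        using C
      proof eventually_elim
        case (elim x)
        show ?case
        proof
          assume x: "x \<in> A"
          have "\<bar>\<bar>g x\<bar> * \<phi> x\<bar> = \<bar>g x\<bar> * \<bar>\<phi> x\<bar>" by (simp add: abs_mult)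
          also have "\<dots> \<le> \<bar>g x\<bar> * C" using elim x by (intro mult_left_mono) auto
          also have "\<dots> \<le> \<bar>g x\<bar> * \<bar>C\<bar>" by (rule mult_left_mono) simp_all
          also have "\<dots> = \<bar>C * \<bar>g x\<bar>\<bar>" by (simp add: abs_mult mult.commute)
          finally show "norm (\<bar>g x\<bar> * \<phi> x) \<le> norm (C * \<bar>g x\<bar>)" by simp
        qed
      qed
    qed
  next
    case False
    define r where "r = real_of_ereal p"
    have pr: "p = ereal r" using False p_gt unfolding r_def by (cases p) auto
    have r1: "r > 1" using p_gt pr by simp
    have conj': "1 / r + 1 / q = 1" using conj False unfolding r_def by simp
    have q1: "q > 1"
    proof (rule ccontr)
      assume "\<not> q > 1" then have "q = 1" using q_ge by simp
      then show False using conj' r1 by simp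
    qed
    have phii: "set_integrable lebesgue A (\<lambda>s. \<bar>\<phi> s\<bar> powr r)"
      using phi_Lp pr by (simp add: in_Lp_def)
    have sumi: "set_integrable lebesgue A (\<lambda>s. \<bar>g s\<bar> powr q / q + \<bar>\<phi> s\<bar> powr r / r)"
      using gi phii by (intro set_integral_add(1) set_integrable_divide)
    show ?thesis
    proof (rule set_integrable_bound[OF sumi meas])
      show "AE x in lebesgue. x \<in> A \<longrightarrow> norm (\<bar>g x\<bar> * \<phi> x) \<le> norm (\<bar>g x\<bar> powr q / q + \<bar>\<phi> x\<bar> powr r / r)"
      proof (intro AE_I2 impI)
        fix x assume x: "x \<in> A"
        have ph: "\<phi> x = \<bar>\<phi> x\<bar>" using phi_nonneg x by simp
        have "\<bar>\<phi> x\<bar> * \<bar>g x\<bar> \<le> \<bar>\<phi> x\<bar> powr r / r + \<bar>g x\<bar> powr q / q"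
          using Youngs_inequality[OF r1 q1 conj'] by simp
        then show "norm (\<bar>g x\<bar> * \<phi> x) \<le> norm (\<bar>g x\<bar> powr q / q + \<bar>\<phi> x\<bar> powr r / r)"
          using ph by (simp add: abs_mult mult.commute)
      qed
    qed
  qed
qed

lemma kphi_int: "t \<in> A \<Longrightarrow> set_integrable lebesgue A (\<lambda>s. \<bar>k t s\<bar> * \<phi> s)"
  using Lq_phi[OF k_Lq] .

lemma mphi_int: "set_integrable lebesgue A (\<lambda>s. m s * \<phi> s)"
proof -
  have "set_integrable lebesgue A (\<lambda>s. \<bar>m s\<bar> * \<phi> s)" using Lq_phi[OF m_Lq] .
  then show ?thesis
    by (rule set_integrable_cong[THEN iffD1, rotated -1]) (auto simp: m_nonneg)
qed

definition dom :: "real \<Rightarrow> (real \<Rightarrow> real) \<Rightarrow> bool" where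
  "dom C d \<longleftrightarrow> set_borel_measurable lebesgue A d \<and> (\<forall>s\<in>A. \<bar>d s\<bar> \<le> C * \<phi> s)"

lemma dom_diff:
  assumes "dom C1 d1" "dom C2 d2"
  shows "dom (C1 + C2) (\<lambda>s. d1 s - d2 s)"
  unfolding dom_def
proof (intro conjI ballI)
  show "set_borel_measurable lebesgue A (\<lambda>s. d1 s - d2 s)"
    using assms unfolding dom_def by (intro sbm_diff) auto
  fix s assume s: "s \<in> A"
  have "\<bar>d1 s\<bar> \<le> C1 * \<phi> s" "\<bar>d2 s\<bar> \<le> C2 * \<phi> s" using assms s unfolding dom_def by auto
  then show "\<bar>d1 s - d2 s\<bar> \<le> (C1 + C2) * \<phi> s"
    using abs_triangle_ineq4[of "d1 s" "d2 s"] by (simp add: distrib_right)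
qed

lemma int_bound_phi:
  assumes gi: "set_integrable lebesgue A (\<lambda>s. \<bar>g s\<bar> * \<phi> s)" and gm: "set_borel_measurable lebesgue A g"
    and d: "dom C d"
  shows "set_integrable lebesgue A (\<lambda>s. g s * d s)"
proof -
  have gi': "set_integrable lebesgue A (\<lambda>s. C * (\<bar>g s\<bar> * \<phi> s))" using gi by simp
  show ?thesis
  proof (rule set_integrable_bound[OF gi'])
    show "set_borel_measurable lebesgue A (\<lambda>s. g s * d s)"
      using gm d unfolding dom_def by (intro sbm_mult) auto
    show "AE x in lebesgue. x \<in> A \<longrightarrow> norm (g x * d x) \<le> norm (C * (\<bar>g x\<bar> * \<phi> x))"
    proof (intro AE_I2 impI)
      fix x assume x: "x \<in> A"
      have "\<bar>g x * d x\<bar> = \<bar>g x\<bar> * \<bar>d x\<bar>" by (simp add: abs_mult)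
      also have "\<dots> \<le> \<bar>g x\<bar> * (C * \<phi> x)" using d x unfolding dom_def by (intro mult_left_mono) auto
      also have "\<dots> \<le> \<bar>C * (\<bar>g x\<bar> * \<phi> x)\<bar>" by (metis abs_ge_self mult.left_commute)
      finally show "norm (g x * d x) \<le> norm (C * (\<bar>g x\<bar> * \<phi> x))" by simp
    qed
  qed
qed

lemma int_kd: "t \<in> A \<Longrightarrow> dom C d \<Longrightarrow> set_integrable lebesgue A (\<lambda>s. k t s * d s)"
  by (rule int_bound_phi[OF kphi_int Lq_m[OF k_Lq]])

lemma int_absd: "dom C d \<Longrightarrow> dom C (\<lambda>s. \<bar>d s\<bar>)"
  unfolding dom_def by (auto intro: sbm_abs)

lemma int_kdiff_d:
  assumes t: "t \<in> A" and tau: "\<tau> \<in> A" and d: "dom C d"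
  shows "set_integrable lebesgue A (\<lambda>s. \<bar>k t s - k \<tau> s\<bar> * \<bar>d s\<bar>)"
proof -
  have "set_integrable lebesgue A (\<lambda>s. k t s * \<bar>d s\<bar>)" "set_integrable lebesgue A (\<lambda>s. k \<tau> s * \<bar>d s\<bar>)"
    using int_kd[OF t int_absd[OF d]] int_kd[OF tau int_absd[OF d]] by auto
  then have "set_integrable lebesgue A (\<lambda>s. k t s * \<bar>d s\<bar> - k \<tau> s * \<bar>d s\<bar>)" by (rule set_integral_diff(1))
  then have "set_integrable lebesgue A (\<lambda>s. \<bar>k t s * \<bar>d s\<bar> - k \<tau> s * \<bar>d s\<bar>\<bar>)" by (rule set_integrable_abs)
  moreover have "\<bar>k t s * \<bar>d s\<bar> - k \<tau> s * \<bar>d s\<bar>\<bar> = \<bar>k t s - k \<tau> s\<bar> * \<bar>d s\<bar>" for s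
    by (simp add: abs_mult left_diff_distrib[symmetric])
  ultimately show ?thesis by simp
qed

lemma int_kdiff_phi:
  assumes t: "t \<in> A" and tau: "\<tau> \<in> A"
  shows "set_integrable lebesgue A (\<lambda>s. \<bar>k t s - k \<tau> s\<bar> * \<phi> s)"
proof -
  have "dom 1 \<phi>" unfolding dom_def using phi_m phi_nonneg by auto
  from int_kdiff_d[OF t tau this] show ?thesis
    by (rule set_integrable_cong[THEN iffD1, rotated -1]) (auto simp: phi_nonneg)
qed

lemma int_md: "dom C d \<Longrightarrow> set_integrable lebesgue A (\<lambda>s. m s * \<bar>d s\<bar>)"
  using int_bound_phi[OF Lq_phi[OF m_Lq] Lq_m[OF m_Lq] int_absd] .

lemma G_diff_abs:
  assumes t: "t \<in> A" and tau: "\<tau> \<in> A" and d: "dom C d"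
  shows "\<bar>Gop k d t - Gop k d \<tau>\<bar> \<le> (LINT s:A|lebesgue. \<bar>k t s - k \<tau> s\<bar> * \<bar>d s\<bar>)"
proof -
  have "Gop k d t - Gop k d \<tau> = (LINT s:A|lebesgue. k t s * d s - k \<tau> s * d s)"
    unfolding Gop_def using int_kd[OF t d] int_kd[OF tau d] by (simp add: set_integral_diff(2))
  also have "\<bar>\<dots>\<bar> \<le> (LINT s:A|lebesgue. \<bar>k t s * d s - k \<tau> s * d s\<bar>)" by (rule set_integral_abs_le)
  also have "\<dots> = (LINT s:A|lebesgue. \<bar>k t s - k \<tau> s\<bar> * \<bar>d s\<bar>)"
    by (simp add: abs_mult left_diff_distrib[symmetric])
  finally show ?thesis .
qed

lemma G_diff_phi:
  assumes t: "t \<in> A" and tau: "\<tau> \<in> A" and d: "dom C d"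
  shows "\<bar>Gop k d t - Gop k d \<tau>\<bar> \<le> C * (LINT s:A|lebesgue. \<bar>k t s - k \<tau> s\<bar> * \<phi> s)"
proof -
  have "(LINT s:A|lebesgue. \<bar>k t s - k \<tau> s\<bar> * \<bar>d s\<bar>) \<le> (LINT s:A|lebesgue. C * (\<bar>k t s - k \<tau> s\<bar> * \<phi> s))"
  proof (rule set_integral_mono)
    show "set_integrable lebesgue A (\<lambda>s. \<bar>k t s - k \<tau> s\<bar> * \<bar>d s\<bar>)" by (rule int_kdiff_d[OF t tau d])
    show "set_integrable lebesgue A (\<lambda>s. C * (\<bar>k t s - k \<tau> s\<bar> * \<phi> s))"
      using int_kdiff_phi[OF t tau] by simp
    fix s assume s: "s \<in> A"
    have "\<bar>k t s - k \<tau> s\<bar> * \<bar>d s\<bar> \<le> \<bar>k t s - k \<tau> s\<bar> * (C * \<phi> s)"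
      using d s unfolding dom_def by (intro mult_left_mono) auto
    then show "\<bar>k t s - k \<tau> s\<bar> * \<bar>d s\<bar> \<le> C * (\<bar>k t s - k \<tau> s\<bar> * \<phi> s)" by (simp add: ac_simps)
  qed
  then show ?thesis using G_diff_abs[OF t tau d] by simp
qed

lemma G_cont:
  assumes d: "dom C d"
  shows "continuous_on A (Gop k d)"
  unfolding continuous_on_eq_continuous_within
proof
  fix \<tau> assume tau: "\<tau> \<in> A"
  have "((\<lambda>t. Gop k d t - Gop k d \<tau>) \<longlongrightarrow> 0) (at \<tau> within A)"
  proof (rule Lim_null_comparison)
    show "\<forall>\<^sub>F t in at \<tau> within A. norm (Gop k d t - Gop k d \<tau>) \<le> C * (LINT s:A|lebesgue. \<bar>k t s - k \<tau> s\<bar> * \<phi> s)"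
      using G_diff_phi[OF _ tau d] by (auto simp: eventually_at_filter)
    show "((\<lambda>t. C * (LINT s:A|lebesgue. \<bar>k t s - k \<tau> s\<bar> * \<phi> s)) \<longlongrightarrow> 0) (at \<tau> within A)"
      using tendsto_mult_right_zero[OF k_cont[OF tau], of C] .
  qed
  then have "((\<lambda>t. Gop k d t - Gop k d \<tau> + Gop k d \<tau>) \<longlongrightarrow> 0 + Gop k d \<tau>) (at \<tau> within A)"
    by (intro tendsto_add tendsto_const)
  then show "continuous (at \<tau> within A) (Gop k d)"
    unfolding continuous_within by simp
qed

end


context L45
begin

lemma pvar_G:
  assumes xs: "xs \<in> partitions 0 1" and d: "dom C d"
  shows "pvar (Gop k d) xs \<le> (LINT s:A|lebesgue. m s * \<bar>d s\<bar>)"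
proof -
  let ?L = "length xs - 1"
  have xsA: "xs ! i \<in> A" if "i < length xs" for i
    using xs that nth_mem unfolding partitions_def by blast
  have idx: "i \<in> {..<?L} \<Longrightarrow> xs ! Suc i \<in> A \<and> xs ! i \<in> A" for i
    using xsA by auto
  let ?a = "\<lambda>i s. \<bar>k (xs ! Suc i) s - k (xs ! i) s\<bar> * \<bar>d s\<bar>"
  have ai: "set_integrable lebesgue A (?a i)" if "i \<in> {..<?L}" for i
    using idx[OF that] int_kdiff_d d by blast
  have "pvar (Gop k d) xs = (\<Sum>i<?L. \<bar>Gop k d (xs ! Suc i) - Gop k d (xs ! i)\<bar>)"
    by (simp add: pvar_def)
  also have "\<dots> \<le> (\<Sum>i<?L. LINT s:A|lebesgue. ?a i s)"
    using idx G_diff_abs[OF _ _ d] by (intro sum_mono) blast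
  also have "\<dots> = (LINT s:A|lebesgue. (\<Sum>i<?L. ?a i s))"
    using set_integral_sum'(2)[of "{..<?L}" lebesgue A ?a] ai by simp
  also have "\<dots> = (LINT s:A|lebesgue. pvar (\<lambda>t. k t s) xs * \<bar>d s\<bar>)"
    by (simp add: pvar_def sum_distrib_right)
  also have "\<dots> \<le> (LINT s:A|lebesgue. m s * \<bar>d s\<bar>)"
  proof (rule set_integral_mono_AE)
    show "set_integrable lebesgue A (\<lambda>s. pvar (\<lambda>t. k t s) xs * \<bar>d s\<bar>)"
      using set_integral_sum'(1)[of "{..<?L}" lebesgue A ?a] ai by (simp add: pvar_def sum_distrib_right)
    show "set_integrable lebesgue A (\<lambda>s. m s * \<bar>d s\<bar>)" by (rule int_md[OF d])
    show "AE s\<in>A in lebesgue. pvar (\<lambda>t. k t s) xs * \<bar>d s\<bar> \<le> m s * \<bar>d s\<bar>"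
      using k_var
    proof eventually_elim
      case (elim s)
      show ?case
      proof
        assume s: "s \<in> A"
        have "ereal (pvar (\<lambda>t. k t s) xs) \<le> ereal (m s)"
          using pvar_le_variation[OF xs] elim s order_trans by blast
        then have "pvar (\<lambda>t. k t s) xs \<le> m s" by simp
        then show "pvar (\<lambda>t. k t s) xs * \<bar>d s\<bar> \<le> m s * \<bar>d s\<bar>"
          by (rule mult_right_mono) simp
      qed
    qed
  qed
  finally show ?thesis .
qed

lemma G_var:
  assumes d: "dom C d"
  shows "variation 0 1 (Gop k d) \<le> ereal (LINT s:A|lebesgue. m s * \<bar>d s\<bar>)"
  unfolding variation_def
  by (rule SUP_least) (use pvar_G[OF _ d] in simp)

lemma G_CBV:
  assumes d: "dom C d"
  shows "Gop k d \<in> CBV"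
  unfolding CBV_def BV_def
  using G_var[OF d] G_cont[OF d] by (auto intro: le_less_trans)

lemma G_norm:
  assumes d: "dom C d"
  shows "bv_norm (Gop k d) \<le> (LINT s:A|lebesgue. (\<bar>k 0 s\<bar> + m s) * \<bar>d s\<bar>)"
proof -
  have 0: "(0::real) \<in> A" by simp
  have i0: "set_integrable lebesgue A (\<lambda>s. \<bar>k 0 s\<bar> * \<bar>d s\<bar>)"
  proof -
    have "set_integrable lebesgue A (\<lambda>s. \<bar>k 0 s * d s\<bar>)" by (rule set_integrable_abs[OF int_kd[OF 0 d]])
    then show ?thesis by (simp add: abs_mult)
  qed
  have "\<bar>Gop k d 0\<bar> \<le> (LINT s:A|lebesgue. \<bar>k 0 s * d s\<bar>)"
    unfolding Gop_def by (rule set_integral_abs_le)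
  also have "\<dots> = (LINT s:A|lebesgue. \<bar>k 0 s\<bar> * \<bar>d s\<bar>)" by (simp add: abs_mult)
  finally have a: "\<bar>Gop k d 0\<bar> \<le> (LINT s:A|lebesgue. \<bar>k 0 s\<bar> * \<bar>d s\<bar>)" .
  have "real_of_ereal (variation 0 1 (Gop k d)) \<le> (LINT s:A|lebesgue. m s * \<bar>d s\<bar>)"
  proof -
    have v: "variation 0 1 (Gop k d) \<le> ereal (LINT s:A|lebesgue. m s * \<bar>d s\<bar>)" by (rule G_var[OF d])
    have "variation 0 1 (Gop k d) \<ge> 0" by (rule variation_nonneg)
    with v show ?thesis by (cases "variation 0 1 (Gop k d)") auto
  qed
  with a have "bv_norm (Gop k d) \<le> (LINT s:A|lebesgue. \<bar>k 0 s\<bar> * \<bar>d s\<bar>) + (LINT s:A|lebesgue. m s * \<bar>d s\<bar>)"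
    unfolding bv_norm_def by linarith
  also have "\<dots> = (LINT s:A|lebesgue. \<bar>k 0 s\<bar> * \<bar>d s\<bar> + m s * \<bar>d s\<bar>)"
    using i0 int_md[OF d] by (simp add: set_integral_add(2))
  also have "\<dots> = (LINT s:A|lebesgue. (\<bar>k 0 s\<bar> + m s) * \<bar>d s\<bar>)"
    by (simp add: distrib_right)
  finally show ?thesis .
qed

lemma G_diff_eq:
  assumes "dom C1 d1" "dom C2 d2" "t \<in> A"
  shows "Gop k d1 t - Gop k d2 t = Gop k (\<lambda>s. d1 s - d2 s) t"
proof -
  have "(LINT s:A|lebesgue. k t s * d1 s - k t s * d2 s) = (LINT s:A|lebesgue. k t s * d1 s) - (LINT s:A|lebesgue. k t s * d2 s)"
    by (rule set_integral_diff(2)[OF int_kd[OF assms(3) assms(1)] int_kd[OF assms(3) assms(2)]])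
  then show ?thesis unfolding Gop_def by (simp only: right_diff_distrib)
qed

lemma w_int: "set_integrable lebesgue A (\<lambda>s. (\<bar>k 0 s\<bar> + m s) * \<phi> s)"
proof -
  have "set_integrable lebesgue A (\<lambda>s. \<bar>k 0 s\<bar> * \<phi> s + m s * \<phi> s)"
    using kphi_int[of 0] mphi_int by (intro set_integral_add(1)) auto
  then show ?thesis by (simp add: distrib_right)
qed

lemma w_m: "set_borel_measurable lebesgue A (\<lambda>s. \<bar>k 0 s\<bar> + m s)"
  using Lq_m[OF k_Lq[of 0]] Lq_m[OF m_Lq] by (intro sbm_add sbm_abs) auto

lemma norm_diff_tendsto:
  fixes D :: "nat \<Rightarrow> real \<Rightarrow> real"
  assumes dD: "\<And>n. dom C (D n)"
    and lim: "AE s in lebesgue. s \<in> A \<longrightarrow> (\<lambda>n. D n s) \<longlonglongrightarrow> 0"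
  shows "(\<lambda>n. bv_norm (Gop k (D n))) \<longlonglongrightarrow> 0"
proof (rule tendsto_sandwich[where f="\<lambda>n. 0" and h="\<lambda>n. LINT s:A|lebesgue. (\<bar>k 0 s\<bar> + m s) * \<bar>D n s\<bar>"])
  show "\<forall>\<^sub>F n in sequentially. 0 \<le> bv_norm (Gop k (D n))" by (simp add: bv_norm_nonneg)
  show "\<forall>\<^sub>F n in sequentially. bv_norm (Gop k (D n)) \<le> (LINT s:A|lebesgue. (\<bar>k 0 s\<bar> + m s) * \<bar>D n s\<bar>)"
    using G_norm[OF dD] by simp
  show "(\<lambda>n. LINT s:A|lebesgue. (\<bar>k 0 s\<bar> + m s) * \<bar>D n s\<bar>) \<longlonglongrightarrow> 0"
  proof (rule set_DCT0[where w="\<lambda>s. C * ((\<bar>k 0 s\<bar> + m s) * \<phi> s)"])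
    show "set_borel_measurable lebesgue A (\<lambda>s. (\<bar>k 0 s\<bar> + m s) * \<bar>D n s\<bar>)" for n
      using dD[of n] w_m unfolding dom_def by (intro sbm_mult sbm_abs) auto
    show "set_integrable lebesgue A (\<lambda>s. C * ((\<bar>k 0 s\<bar> + m s) * \<phi> s))"
      using w_int by simp
    show "AE s in lebesgue. s \<in> A \<longrightarrow> (\<lambda>n. (\<bar>k 0 s\<bar> + m s) * \<bar>D n s\<bar>) \<longlonglongrightarrow> 0"
      using lim
    proof eventually_elim
      case (elim s)
      show ?case
      proof
        assume "s \<in> A"
        then have "(\<lambda>n. D n s) \<longlonglongrightarrow> 0" using elim by simp
        then have "(\<lambda>n. \<bar>D n s\<bar>) \<longlonglongrightarrow> 0" using tendsto_rabs_zero by blast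
        then show "(\<lambda>n. (\<bar>k 0 s\<bar> + m s) * \<bar>D n s\<bar>) \<longlonglongrightarrow> 0"
          using tendsto_mult_right_zero by blast
      qed
    qed
    show "AE s in lebesgue. s \<in> A \<longrightarrow> \<bar>(\<bar>k 0 s\<bar> + m s) * \<bar>D n s\<bar>\<bar> \<le> C * ((\<bar>k 0 s\<bar> + m s) * \<phi> s)" for n
    proof (intro AE_I2 impI)
      fix s assume s: "s \<in> A"
      have w0: "0 \<le> \<bar>k 0 s\<bar> + m s" using m_nonneg[OF s] by simp
      have "\<bar>(\<bar>k 0 s\<bar> + m s) * \<bar>D n s\<bar>\<bar> = (\<bar>k 0 s\<bar> + m s) * \<bar>D n s\<bar>" using w0 by (simp add: abs_mult)
      also have "\<dots> \<le> (\<bar>k 0 s\<bar> + m s) * (C * \<phi> s)"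
        using dD[of n] s w0 unfolding dom_def by (intro mult_left_mono) auto
      finally show "\<bar>(\<bar>k 0 s\<bar> + m s) * \<bar>D n s\<bar>\<bar> \<le> C * ((\<bar>k 0 s\<bar> + m s) * \<phi> s)" by (simp add: ac_simps)
    qed
  qed
qed simp

lemma h_dom:
  assumes Xm: "set_borel_measurable lebesgue A X" and B: "\<And>s. s \<in> A \<Longrightarrow> \<bar>X s\<bar> \<le> B"
  shows "dom (\<psi> B) (\<lambda>s. f s (X s))"
  unfolding dom_def
proof (intro conjI ballI)
  show "set_borel_measurable lebesgue A (\<lambda>s. f s (X s))"
    by (rule caratheodory_measurable[OF f_meas f_cont Xm B])
  fix s assume s: "s \<in> A"
  have "\<psi> \<bar>X s\<bar> \<le> \<psi> B"
    using psi_mono B[OF s] by (auto intro: mono_onD)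
  then have "\<phi> s * \<psi> \<bar>X s\<bar> \<le> \<phi> s * \<psi> B" using phi_nonneg[OF s] by (rule mult_left_mono)
  then show "\<bar>f s (X s)\<bar> \<le> \<psi> B * \<phi> s" using f_bound[OF s, of "X s"] by (simp add: mult.commute)
qed

end


context L45
begin

lemma part1:
  assumes x: "x \<in> BV"
  shows "(\<forall>t\<in>A. set_integrable lebesgue A (\<lambda>s. k t s * f s (x s))) \<and> F2 k f x \<in> CBV"
proof -
  have d: "dom (\<psi> (bv_norm x)) (\<lambda>s. f s (x s))"
    by (rule h_dom[OF BV_measurable[OF x] BV_bound[OF x]])
  show ?thesis using int_kd[OF _ d] G_CBV[OF d] by (simp add: F2_Gop)
qed

lemma F2_diff_Gop:
  assumes "dom C1 d1" "dom C2 d2"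
  shows "bv_norm (Gop k d1 - Gop k d2) = bv_norm (Gop k (\<lambda>s. d1 s - d2 s))"
  by (rule bv_norm_cong) (simp add: G_diff_eq[OF assms])

lemma part2:
  assumes x: "x \<in> BV" and eps: "\<epsilon> > 0"
  shows "\<exists>\<delta>>0. \<forall>y\<in>BV. bv_norm (y - x) < \<delta> \<longrightarrow> bv_norm (F2 k f y - F2 k f x) < \<epsilon>"
proof (rule ccontr)
  assume "\<not> ?thesis"
  then have "\<forall>n. \<exists>y. y \<in> BV \<and> bv_norm (y - x) < inverse (real (Suc n)) \<and> \<not> bv_norm (F2 k f y - F2 k f x) < \<epsilon>"
    by (metis inverse_positive_iff_positive of_nat_0_less_iff zero_less_Suc)
  then obtain Y where Y: "\<And>n. Y n \<in> BV" "\<And>n. bv_norm (Y n - x) < inverse (real (Suc n))"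
    "\<And>n. \<not> bv_norm (F2 k f (Y n) - F2 k f x) < \<epsilon>"
    by metis
  define B where "B = bv_norm x"
  have close: "\<bar>Y n s - x s\<bar> < inverse (real (Suc n))" if s: "s \<in> A" for n s
  proof -
    have "\<bar>(Y n - x) s\<bar> \<le> bv_norm (Y n - x)" by (rule BV_bound[OF BV_diff[OF Y(1) x] s])
    then show ?thesis using Y(2)[of n] by simp
  qed
  have bY: "\<bar>Y n s\<bar> \<le> B + 1" if s: "s \<in> A" for n s
  proof -
    have "inverse (real (Suc n)) \<le> 1" using inverse_le_1_iff[of "real (Suc n)"] by simp
    then show ?thesis using close[OF s, of n] BV_bound[OF x s] unfolding B_def by linarith
  qed
  define D where "D n = (\<lambda>s. f s (Y n s) - f s (x s))" for n
  have dY: "dom (\<psi> (B + 1)) (\<lambda>s. f s (Y n s))" for n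
    by (rule h_dom[OF BV_measurable[OF Y(1)] bY])
  have dx: "dom (\<psi> B) (\<lambda>s. f s (x s))"
    unfolding B_def by (rule h_dom[OF BV_measurable[OF x] BV_bound[OF x]])
  have dD: "dom (\<psi> (B + 1) + \<psi> B) (D n)" for n
    unfolding D_def by (rule dom_diff[OF dY dx])
  have eqn: "bv_norm (F2 k f (Y n) - F2 k f x) = bv_norm (Gop k (D n))" for n
    unfolding F2_Gop D_def by (rule F2_diff_Gop[OF dY dx])
  have lim: "AE s in lebesgue. s \<in> A \<longrightarrow> (\<lambda>n. D n s) \<longlonglongrightarrow> 0"
    using f_cont
  proof eventually_elim
    case (elim s)
    show ?case
    proof
      assume s: "s \<in> A"
      have "((\<lambda>n. Y n s - x s) \<longlongrightarrow> 0) sequentially"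
      proof (rule Lim_null_comparison)
        show "\<forall>\<^sub>F n in sequentially. norm (Y n s - x s) \<le> inverse (real (Suc n))"
          using close[OF s] by (auto intro: always_eventually less_imp_le)
        show "(\<lambda>n. inverse (real (Suc n))) \<longlonglongrightarrow> 0" by (rule LIMSEQ_inverse_real_of_nat)
      qed
      then have "(\<lambda>n. Y n s) \<longlonglongrightarrow> x s" by (simp add: Lim_null[symmetric])
      moreover have "isCont (f s) (x s)"
        using elim s by (simp add: continuous_on_eq_continuous_at)
      ultimately have "(\<lambda>n. f s (Y n s)) \<longlonglongrightarrow> f s (x s)"
        using isCont_tendsto_compose by blast
      then show "(\<lambda>n. D n s) \<longlonglongrightarrow> 0"
        unfolding D_def by (simp add: Lim_null[symmetric])
    qed
  qed
  have "(\<lambda>n. bv_norm (Gop k (D n))) \<longlonglongrightarrow> 0" by (rule norm_diff_tendsto[OF dD lim])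
  then have "eventually (\<lambda>n. bv_norm (Gop k (D n)) < \<epsilon>) sequentially"
    using eps by (simp add: order_tendsto_iff)
  then obtain N0 where "\<forall>n\<ge>N0. bv_norm (Gop k (D n)) < \<epsilon>" by (auto simp: eventually_sequentially)
  then have "bv_norm (Gop k (D N0)) < \<epsilon>" by simp
  then show False using Y(3)[of N0] eqn[of N0] by simp
qed

lemma part3:
  fixes xs :: "nat \<Rightarrow> real \<Rightarrow> real"
  assumes xs: "\<forall>n. xs n \<in> BV \<and> bv_norm (xs n) \<le> R"
  shows "\<exists>r g. strict_mono r \<and> g \<in> CBV \<and> (\<lambda>n. bv_norm (F2 k f (xs (r n)) - g)) \<longlonglongrightarrow> 0"
proof -
  have xsB: "\<And>n. xs n \<in> BV" and xsR: "\<And>n. bv_norm (xs n) \<le> R" using xs by auto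
  from BV_helly[of xs R, OF xsB xsR] obtain r X N where rXN0: "strict_mono r \<and> countable N \<and> X \<in> borel_measurable borel \<and>
      (\<forall>s. \<bar>X s\<bar> \<le> 3 * R) \<and> (\<forall>s\<in>A. s \<notin> N \<longrightarrow> (\<lambda>n. xs (r n) s) \<longlonglongrightarrow> X s)"
    by (elim exE)
  have rXN: "strict_mono r" "countable N" "X \<in> borel_measurable borel"
      "\<forall>s. \<bar>X s\<bar> \<le> 3 * R" "\<forall>s\<in>A. s \<notin> N \<longrightarrow> (\<lambda>n. xs (r n) s) \<longlonglongrightarrow> X s"
    by (simp_all add: rXN0)
  have Xl: "X \<in> borel_measurable lebesgue" by (rule borel_to_lebesgue[OF rXN(3)])
  have Xm: "set_borel_measurable lebesgue A X"
    unfolding sbm_iff using Xl by (intro borel_measurable_times borel_measurable_indicator) auto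
  define H where "H = (\<lambda>s. f s (X s))"
  have dH: "dom (\<psi> (3 * R)) H"
    unfolding H_def using rXN(4) by (intro h_dom[OF Xm]) auto
  have dn: "dom (\<psi> R) (\<lambda>s. f s (xs (r n) s))" for n
    using BV_bound[OF xsB[of "r n"]] xsR[of "r n"]
    by (intro h_dom[OF BV_measurable[OF xsB]]) (meson order_trans)
  define D where "D n = (\<lambda>s. f s (xs (r n) s) - H s)" for n
  have dD: "dom (\<psi> R + \<psi> (3 * R)) (D n)" for n
    unfolding D_def by (rule dom_diff[OF dn dH])
  have eqn: "bv_norm (F2 k f (xs (r n)) - Gop k H) = bv_norm (Gop k (D n))" for n
    unfolding F2_Gop D_def by (rule F2_diff_Gop[OF dn dH])
  have Nnull: "AE s in lebesgue. s \<notin> N"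
    by (rule AE_not_in[OF null_sets_completionI[OF countable_imp_null_set_lborel[OF rXN(2)]]])
  have lim: "AE s in lebesgue. s \<in> A \<longrightarrow> (\<lambda>n. D n s) \<longlonglongrightarrow> 0"
    using f_cont Nnull
  proof eventually_elim
    case (elim s)
    show ?case
    proof
      assume s: "s \<in> A"
      have "(\<lambda>n. xs (r n) s) \<longlonglongrightarrow> X s" using rXN(5) s elim by blast
      moreover have "isCont (f s) (X s)"
        using elim s by (simp add: continuous_on_eq_continuous_at)
      ultimately have "(\<lambda>n. f s (xs (r n) s)) \<longlonglongrightarrow> f s (X s)"
        using isCont_tendsto_compose by blast
      then show "(\<lambda>n. D n s) \<longlonglongrightarrow> 0"
        unfolding D_def H_def by (simp add: Lim_null[symmetric])
    qed
  qed
  have "(\<lambda>n. bv_norm (Gop k (D n))) \<longlonglongrightarrow> 0" by (rule norm_diff_tendsto[OF dD lim])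
  then have "(\<lambda>n. bv_norm (F2 k f (xs (r n)) - Gop k H)) \<longlonglongrightarrow> 0" by (simp add: eqn)
  then show ?thesis using rXN(1) G_CBV[OF dH] by blast
qed

lemma main:
  "(\<forall>x\<in>BV. (\<forall>t\<in>{0..1}. set_integrable lebesgue {0..1} (\<lambda>s. k t s * f s (x s)))
                  \<and> F2 k f x \<in> CBV)
       \<and> (\<forall>x\<in>BV. \<forall>\<epsilon>>0. \<exists>\<delta>>0. \<forall>y\<in>BV.
             bv_norm (y - x) < \<delta> \<longrightarrow> bv_norm (F2 k f y - F2 k f x) < \<epsilon>)
       \<and> (\<forall>xs :: nat \<Rightarrow> real \<Rightarrow> real. \<forall>R.
             (\<forall>n. xs n \<in> BV \<and> bv_norm (xs n) \<le> R) \<longrightarrow>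
             (\<exists>r g. strict_mono r \<and> g \<in> CBV \<and>
                 (\<lambda>n. bv_norm (F2 k f (xs (r n)) - g)) \<longlonglongrightarrow> 0))"
  using part1 part2 part3 by blast

end

theorem lemma4p5:
  fixes p :: ereal and q :: real
    and f :: "real \<Rightarrow> real \<Rightarrow> real" and k :: "real \<Rightarrow> real \<Rightarrow> real"
    and \<psi> \<phi> m :: "real \<Rightarrow> real"
  assumes p_gt: "p > 1" and q_ge: "q \<ge> 1"
    and conj: "if p = \<infinity> then q = 1 else 1 / real_of_ereal p + 1 / q = 1"
    and f_meas: "\<And>u. set_borel_measurable lebesgue {0..1} (\<lambda>t. f t u)"
    and f_cont: "AE t in lebesgue. t \<in> {0..1} \<longrightarrow> continuous_on UNIV (f t)"
    and psi_mono: "mono_on {0..} \<psi>" and psi_nonneg: "\<And>u. u \<ge> 0 \<Longrightarrow> \<psi> u \<ge> 0"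
    and phi_Lp: "in_Lp p \<phi>" and phi_nonneg: "\<And>s. s \<in> {0..1} \<Longrightarrow> \<phi> s \<ge> 0"
    and f_bound: "\<And>t u. t \<in> {0..1} \<Longrightarrow> \<bar>f t u\<bar> \<le> \<phi> t * \<psi> \<bar>u\<bar>"
    and k_Lq: "\<And>t. t \<in> {0..1} \<Longrightarrow> in_Lp (ereal q) (k t)"
    and m_Lq: "in_Lp (ereal q) m" and m_nonneg: "\<And>s. s \<in> {0..1} \<Longrightarrow> m s \<ge> 0"
    and k_var: "AE s in lebesgue. s \<in> {0..1} \<longrightarrow> variation 0 1 (\<lambda>t. k t s) \<le> ereal (m s)"
    and k_cont: "\<And>\<tau>. \<tau> \<in> {0..1} \<Longrightarrow>
        ((\<lambda>t. LINT s:{0..1}|lebesgue. \<bar>k t s - k \<tau> s\<bar> * \<phi> s) \<longlongrightarrow> 0) (at \<tau> within {0..1})"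
  shows "(\<forall>x\<in>BV. (\<forall>t\<in>{0..1}. set_integrable lebesgue {0..1} (\<lambda>s. k t s * f s (x s)))
                  \<and> F2 k f x \<in> CBV)
       \<and> (\<forall>x\<in>BV. \<forall>\<epsilon>>0. \<exists>\<delta>>0. \<forall>y\<in>BV.
             bv_norm (y - x) < \<delta> \<longrightarrow> bv_norm (F2 k f y - F2 k f x) < \<epsilon>)
       \<and> (\<forall>xs :: nat \<Rightarrow> real \<Rightarrow> real. \<forall>R.
             (\<forall>n. xs n \<in> BV \<and> bv_norm (xs n) \<le> R) \<longrightarrow>
             (\<exists>r g. strict_mono r \<and> g \<in> CBV \<and>
                 (\<lambda>n. bv_norm (F2 k f (xs (r n)) - g)) \<longlonglongrightarrow> 0))"
proof -
  interpret L45 p q f k \<psi> \<phi> m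
    by (rule L45.intro[OF assms])
  show ?thesis by (rule main)
qed

end
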